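(* Let $\Theta=\{1,\ldots,M\}$ be a finite universe of $M$ elements, let $\mathbf{p}=[p_1,\ldots,p_M]$ be a probability mass function on $\Theta$, and let $\mathbf{R}=\{r_{mn}\}_{m,n=1}^M$ be a stochastic matrix (noise channel). Define $\tilde{p}_n=\sum_{m=1}^M p_m r_{mn}$ and $\tilde{\mathbf p}=[\tilde p_1,\ldots,\tilde p_M]$. Let $\mathbf{q}=[q_1,\ldots,q_M]$ be a vector of real quality values. Let $\Theta_0\subset\Theta$ be a fixed initial set. For $t=1,2,\ldots$, let $\theta_t$ be drawn from $\mathbf{p}$ and let $\hat{\theta}_t\in\Theta$ satisfy $\Pr(\hat{\theta}_t=n\mid\theta_t=m)=r_{mn}$, with the pairs $(\theta_t,\hat\theta_t)$ independent across $t$. Set $\Theta_t=\Theta_{t-1}\cup\{\hat{\theta}_t\}$ and $Q_t=\sum_{\theta\in\Theta_t}q_\theta$. For $k\ge 1$ define the $k$th-order quality-prevalence function $D^k_{\Theta_0}(\tilde{\mathbf{p}},\mathbf{q})=\sum_{\theta\notin\Theta_0}q_\theta\tilde{p}_\theta^k$. Then for every positive integer $T$, $$E[Q_T\mid\Theta_0]=Q_0-\sum_{k=1}^T(-1)^k\binom{T}{k}D^k_{\Theta_0}(\tilde{\mathbf{p}},\mathbf{q}).$$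
   Context: This models technology-aided discovery: an explorer initially knows $\Theta_0$; at each step an element is drawn according to $\mathbf p$, a supporting technology reports a noisy identification $\hat\theta_t$ with misclassification probabilities $r_{mn}$, and the explorer adds $\hat\theta_t$ to her known set. Each element $\theta$ has quality $q_\theta$, and $Q_t$ is the total quality of the known set at time $t$ (so $Q_0=\sum_{\theta\in\Theta_0}q_\theta$). *)

theory Defs
  imports "HOL-Probability.Probability"
begin

text \<open>Universe is {1..M}. The pmf p gives p_m = pmf p m; the channel R gives
  r_mn = pmf (R m) n.\<close>

definition step_pmf :: "nat pmf \<Rightarrow> (nat \<Rightarrow> nat pmf) \<Rightarrow> (nat \<times> nat) pmf" where
  "step_pmf p R = do { m \<leftarrow> p; n \<leftarrow> R m; return_pmf (m, n) }"

definition samples_pmf :: "nat pmf \<Rightarrow> (nat \<Rightarrow> nat pmf) \<Rightarrow> nat \<Rightarrow> (nat \<Rightarrow> nat \<times> nat) pmf" where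
  "samples_pmf p R T = Pi_pmf {1..T} (0, 0) (\<lambda>_. step_pmf p R)"

definition known_set :: "nat set \<Rightarrow> (nat \<Rightarrow> nat \<times> nat) \<Rightarrow> nat \<Rightarrow> nat set" where
  "known_set \<Theta>0 \<omega> T = \<Theta>0 \<union> (\<lambda>t. snd (\<omega> t)) ` {1..T}"

definition total_quality :: "(nat \<Rightarrow> real) \<Rightarrow> nat set \<Rightarrow> real" where
  "total_quality q S = (\<Sum>\<theta>\<in>S. q \<theta>)"

definition ptilde :: "nat \<Rightarrow> nat pmf \<Rightarrow> (nat \<Rightarrow> nat pmf) \<Rightarrow> nat \<Rightarrow> real" where
  "ptilde M p R n = (\<Sum>m\<in>{1..M}. pmf p m * pmf (R m) n)"

definition quality_prevalence :: "nat \<Rightarrow> nat \<Rightarrow> nat set \<Rightarrow> (nat \<Rightarrow> real) \<Rightarrow> (nat \<Rightarrow> real) \<Rightarrow> real" where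
  "quality_prevalence M k \<Theta>0 pt q = (\<Sum>\<theta>\<in>{1..M} - \<Theta>0. q \<theta> * pt \<theta> ^ k)"

end

theory Submission
  imports Defs
begin

lemma ind_int: "integrable (measure_pmf N) (indicator A :: _ \<Rightarrow> real)"
  by (rule integrable_real_indicator) (auto simp: less_top[symmetric])

lemma atMost_eq: "{..(T::nat)} = insert 0 {1..T}" by auto
lemma binom_aux:
  fixes x :: real
  shows "1 - (1 - x) ^ T = - (\<Sum>k=1..T. (-1) ^ k * real (T choose k) * x ^ k)"
proof -
  have "(1 - x) ^ T = ((-x) + 1) ^ T" by (simp add: add.commute)
  also have "\<dots> = (\<Sum>k\<le>T. real (T choose k) * (-x) ^ k * 1 ^ (T - k))"
    by (rule binomial_ring)
  also have "\<dots> = (\<Sum>k\<le>T. (-1) ^ k * real (T choose k) * x ^ k)"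
    by (intro sum.cong refl) (simp only: power_minus[of x] power_one mult_1_right mult_ac)
  also have "\<dots> = 1 + (\<Sum>k=1..T. (-1) ^ k * real (T choose k) * x ^ k)"
    by (subst atMost_eq) simp
  finally show ?thesis by simp
qed

theorem proposition4p2:
  fixes M :: nat and p :: "nat pmf" and R :: "nat \<Rightarrow> nat pmf"
    and q :: "nat \<Rightarrow> real" and \<Theta>0 :: "nat set" and T :: nat
  assumes p_supp: "set_pmf p \<subseteq> {1..M}"
    and R_supp: "\<And>m. m \<in> {1..M} \<Longrightarrow> set_pmf (R m) \<subseteq> {1..M}"
    and \<Theta>0_sub: "\<Theta>0 \<subseteq> {1..M}"
    and T_pos: "0 < T"
  shows "measure_pmf.expectation (samples_pmf p R T)
           (\<lambda>\<omega>. total_quality q (known_set \<Theta>0 \<omega> T))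
         = total_quality q \<Theta>0
           - (\<Sum>k=1..T. (-1) ^ k * real (T choose k)
                 * quality_prevalence M k \<Theta>0 (ptilde M p R) q)"
proof -
  define S where "S = samples_pmf p R T"
  define U where "U = {1..M} - \<Theta>0"
  define g where "g = (\<lambda>\<theta> (v::nat\<times>nat). if snd v = \<theta> then 0 else (1::real))"
  have step_set: "set_pmf (step_pmf p R) \<subseteq> {1..M} \<times> {1..M}"
  proof
    fix v assume "v \<in> set_pmf (step_pmf p R)"
    then obtain m n where v: "v = (m, n)" "m \<in> set_pmf p" "n \<in> set_pmf (R m)"
      unfolding step_pmf_def by (auto simp: set_bind_pmf)
    then have "m \<in> {1..M}" using p_supp by blast
    then show "v \<in> {1..M} \<times> {1..M}" using v R_supp by blast
  qed
  have finstep: "finite (set_pmf (step_pmf p R))"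
    by (rule finite_subset[OF step_set]) auto
  have setS: "set_pmf S = PiE_dflt {1..T} (0,0) (\<lambda>_. set_pmf (step_pmf p R))"
    unfolding S_def samples_pmf_def by (subst set_Pi_pmf) (auto simp: o_def)
  have finS: "finite (set_pmf S)"
    unfolding setS using finstep by blast
  have pw: "total_quality q (known_set \<Theta>0 \<omega> T) =
      total_quality q \<Theta>0 + (\<Sum>\<theta>\<in>U. q \<theta> * (1 - (\<Prod>t\<in>{1..T}. g \<theta> (\<omega> t))))"
    if "\<omega> \<in> set_pmf S" for \<omega>
  proof -
    define H where "H = (\<lambda>t. snd (\<omega> t)) ` {1..T}"
    have HM: "H \<subseteq> {1..M}"
      using that step_set unfolding setS H_def PiE_dflt_def by force
    have ks: "known_set \<Theta>0 \<omega> T = \<Theta>0 \<union> (U \<inter> H)"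
      unfolding known_set_def H_def[symmetric] U_def using HM by blast
    have fin0: "finite \<Theta>0" using \<Theta>0_sub finite_subset by blast
    have "total_quality q (known_set \<Theta>0 \<omega> T) = total_quality q \<Theta>0 + sum q (U \<inter> H)"
      unfolding ks total_quality_def
      by (subst sum.union_disjoint) (auto simp: fin0 U_def)
    also have "sum q (U \<inter> H) = (\<Sum>\<theta>\<in>U. q \<theta> * (if \<theta> \<in> H then 1 else 0))"
      by (simp add: sum.inter_restrict U_def if_distrib cong: if_cong)
    also have "\<dots> = (\<Sum>\<theta>\<in>U. q \<theta> * (1 - (\<Prod>t\<in>{1..T}. g \<theta> (\<omega> t))))"
    proof (intro sum.cong refl)
      fix \<theta> assume "\<theta> \<in> U"
      have "(\<Prod>t\<in>{1..T}. g \<theta> (\<omega> t)) = (if \<theta> \<in> H then 0 else 1)"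
      proof (cases "\<theta> \<in> H")
        case True
        then obtain t where "t \<in> {1..T}" "snd (\<omega> t) = \<theta>" unfolding H_def by auto
        then show ?thesis using True by (subst prod_zero) (auto simp: g_def)
      next
        case False
        then show ?thesis by (intro trans[OF prod.neutral]) (auto simp: g_def H_def)
      qed
      then show "q \<theta> * (if \<theta> \<in> H then 1 else 0) = q \<theta> * (1 - (\<Prod>t\<in>{1..T}. g \<theta> (\<omega> t)))"
        by simp
    qed
    finally show ?thesis .
  qed
  have int: "integrable (measure_pmf S) f" for f :: "_ \<Rightarrow> real"
    by (rule integrable_measure_pmf_finite[OF finS])
  have ms: "map_pmf snd (step_pmf p R) = bind_pmf p R"
    by (simp add: step_pmf_def map_bind_pmf bind_return_pmf')
  have pb: "pmf (bind_pmf p R) \<theta> = ptilde M p R \<theta>" for \<theta>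
  proof -
    have "pmf (bind_pmf p R) \<theta> = (\<integral>m. pmf (R m) \<theta> \<partial>measure_pmf p)"
      by (rule pmf_bind)
    also have "\<dots> = (\<Sum>m\<in>{1..M}. pmf p m *\<^sub>R pmf (R m) \<theta>)"
      using p_supp by (intro integral_measure_pmf) auto
    finally show ?thesis by (simp add: ptilde_def)
  qed
  have estep: "measure_pmf.expectation (step_pmf p R) (g \<theta>) = 1 - ptilde M p R \<theta>" for \<theta>
  proof -
    have "measure_pmf.expectation (step_pmf p R) (g \<theta>)
        = measure_pmf.expectation (map_pmf snd (step_pmf p R)) (\<lambda>n. 1 - indicator {\<theta>} n)"
      by (simp add: g_def indicator_def) (intro arg_cong[where f="measure_pmf.expectation _"] ext, simp)
    also have "\<dots> = measure_pmf.expectation (bind_pmf p R) (\<lambda>n. 1 - indicator {\<theta>} n)"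
      unfolding ms ..
    also have "\<dots> = 1 - measure_pmf.prob (bind_pmf p R) {\<theta>}"
      by (subst Bochner_Integration.integral_diff) (auto simp: ind_int measure_pmf.prob_space)
    also have "\<dots> = 1 - ptilde M p R \<theta>"
      by (simp add: measure_pmf_single pb)
    finally show ?thesis .
  qed
  have eprod: "measure_pmf.expectation S (\<lambda>\<omega>. \<Prod>t\<in>{1..T}. g \<theta> (\<omega> t)) = (1 - ptilde M p R \<theta>) ^ T" for \<theta>
    unfolding S_def samples_pmf_def
    by (subst expectation_prod_Pi_pmf[where f="\<lambda>_. g \<theta>"])
       (auto simp: estep[unfolded g_def] g_def integrable_measure_pmf_finite finstep)
  have "measure_pmf.expectation S (\<lambda>\<omega>. total_quality q (known_set \<Theta>0 \<omega> T))
      = measure_pmf.expectation S (\<lambda>\<omega>. total_quality q \<Theta>0 + (\<Sum>\<theta>\<in>U. q \<theta> * (1 - (\<Prod>t\<in>{1..T}. g \<theta> (\<omega> t)))))"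
    by (intro integral_cong_AE) (auto simp: AE_measure_pmf_iff pw)
  also have "\<dots> = total_quality q \<Theta>0 + (\<Sum>\<theta>\<in>U. q \<theta> * (1 - (1 - ptilde M p R \<theta>) ^ T))"
    using eprod by (simp add: int integral_sum)
  also have "\<dots> = total_quality q \<Theta>0
           - (\<Sum>k=1..T. (-1) ^ k * real (T choose k)
                 * quality_prevalence M k \<Theta>0 (ptilde M p R) q)"
  proof -
    have "(\<Sum>\<theta>\<in>U. q \<theta> * (1 - (1 - ptilde M p R \<theta>) ^ T))
        = - (\<Sum>\<theta>\<in>U. \<Sum>k=1..T. (-1) ^ k * real (T choose k) * (q \<theta> * ptilde M p R \<theta> ^ k))"
      unfolding binom_aux by (simp add: sum_distrib_left sum_negf mult_ac)
    also have "\<dots> = - (\<Sum>k=1..T. (-1) ^ k * real (T choose k) * quality_prevalence M k \<Theta>0 (ptilde M p R) q)"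
      unfolding quality_prevalence_def U_def[symmetric]
      by (subst sum.swap) (simp add: sum_distrib_left)
    finally show ?thesis by simp
  qed
  finally show ?thesis unfolding S_def .
qed

end
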